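(* Let $m/n\in(0,1/2)$ in lowest terms, write $c_{m/n}=1\,0^{\kappa_1}\,11\,0^{\kappa_2}\,11\cdots11\,0^{\kappa_m}\,1$, and let $1\le r\le m$. Then the word $c=1\,0^{\kappa_r+1}\,11\,0^{\kappa_{r+1}}\,11\cdots11\,0^{\kappa_m}\,1$ disagrees with $c_{m/n}$ at some position within the shorter of their two lengths, and $c$ is greater than $c_{m/n}$ in the unimodal order.
   Context: $\kappa_1=\lfloor n/m\rfloor-1$ and $\kappa_i=\lfloor in/m\rfloor-\lfloor(i-1)n/m\rfloor-2$ for $2\le i\le m$. The unimodal order $\prec$ on words over $\{0,1\}$ which disagree within their common length: if $j$ is the first index with $s_j\ne t_j$, then $s\prec t$ iff either $s_0\cdots s_{j-1}$ contains an even number of $1$s and $s_j<t_j$, or an odd number of $1$s and $s_j>t_j$. *)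

theory Defs
  imports Main
begin

text \<open>Words over {0,1} are lists of naturals with entries 0 and 1.\<close>

definition kappa :: "nat \<Rightarrow> nat \<Rightarrow> nat \<Rightarrow> nat" where
  "kappa m n i = (if i = 1 then n div m - 1
                  else (i * n) div m - ((i - 1) * n) div m - 2)"

definition blocks :: "nat \<Rightarrow> nat \<Rightarrow> nat \<Rightarrow> nat \<Rightarrow> nat list" where
  "blocks m n a b = concat (map (\<lambda>i. [1, 1] @ replicate (kappa m n i) 0) [a..<Suc b])"

definition kneading :: "nat \<Rightarrow> nat \<Rightarrow> nat list" where
  "kneading m n = [1] @ replicate (kappa m n 1) 0 @ blocks m n 2 m @ [1]"

definition cword :: "nat \<Rightarrow> nat \<Rightarrow> nat \<Rightarrow> nat list" where
  "cword m n r = [1] @ replicate (kappa m n r + 1) 0 @ blocks m n (Suc r) m @ [1]"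

definition disagree :: "nat list \<Rightarrow> nat list \<Rightarrow> bool" where
  "disagree s t \<longleftrightarrow> (\<exists>j < min (length s) (length t). s ! j \<noteq> t ! j)"

definition first_diff :: "nat list \<Rightarrow> nat list \<Rightarrow> nat" where
  "first_diff s t = (LEAST j. j < min (length s) (length t) \<and> s ! j \<noteq> t ! j)"

definition unimodal_less :: "nat list \<Rightarrow> nat list \<Rightarrow> bool" where
  "unimodal_less s t \<longleftrightarrow> disagree s t \<and>
     (let j = first_diff s t; k = count_list (take j s) 1 in
       (even k \<and> s ! j < t ! j) \<or> (odd k \<and> s ! j > t ! j))"

end

theory Submission
  imports Defs
begin


lemma key:
  assumes s: "s = P @ 1 # s'" and t: "t = P @ 0 # t'" and o: "odd (count_list P 1)"
  shows "disagree t s \<and> unimodal_less s t"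
proof -
  have d: "s ! length P \<noteq> t ! length P" using s t by simp
  have lt: "length P < min (length s) (length t)" using s t by simp
  have fd: "first_diff s t = length P"
    unfolding first_diff_def
  proof (rule Least_equality)
    show "length P < min (length s) (length t) \<and> s ! length P \<noteq> t ! length P" using d lt by simp
  next
    fix y assume "y < min (length s) (length t) \<and> s ! y \<noteq> t ! y"
    then show "length P \<le> y" using s t by (auto simp: nth_append split: if_splits)
  qed
  have "disagree t s" unfolding disagree_def using d lt by (metis min.commute)
  moreover have "disagree s t" unfolding disagree_def using d lt by metis
  ultimately show ?thesis unfolding unimodal_less_def Let_def fd using s t o by simp
qed

lemma blocks_split:
  assumes "1 \<le> a" "a \<le> c" "c \<le> b"
  shows "blocks m n a b = blocks m n a (c-1) @ [1,1] @ replicate (kappa m n c) 0 @ blocks m n (Suc c) b"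
proof -
  have "[a..<Suc b] = [a..<c] @ [c..<Suc b]" using assms
    by (metis le_SucI le_add_diff_inverse upt_add_eq_append)
  also have "[c..<Suc b] = c # [Suc c..<Suc b]" using assms by (simp add: upt_conv_Cons)
  finally show ?thesis using assms unfolding blocks_def by simp
qed

lemma blocks_shift:
  assumes "\<And>i. a \<le> i \<Longrightarrow> i \<le> b \<Longrightarrow> kappa m n (i + s) = kappa m n i"
  shows "blocks m n (a+s) (b+s) = blocks m n a b"
  using assms
proof (induction b)
  case 0
  then show ?case by (cases a) (auto simp: blocks_def)
next
  case (Suc b)
  show ?case
  proof (cases "a \<le> Suc b")
    case True
    have ih: "blocks m n (a+s) (b+s) = blocks m n a b" using Suc by simp
    have e: "kappa m n (Suc b + s) = kappa m n (Suc b)" using Suc.prems[of "Suc b"] True by simp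
    have "[a+s..<Suc (Suc b + s)] = [a+s..<Suc (b+s)] @ [Suc b + s]" using True by simp
    moreover have "[a..<Suc (Suc b)] = [a..<Suc b] @ [Suc b]" using True by simp
    ultimately show ?thesis using ih e unfolding blocks_def by simp
  next
    case False
    then show ?thesis by (simp add: blocks_def)
  qed
qed

lemma blocks_hd: "\<exists>s'. blocks m n a b @ [1] = 1 # s'"
proof (cases "a \<le> b")
  case True
  then have "[a..<Suc b] = a # [Suc a..<Suc b]" by (simp add: upt_conv_Cons)
  then show ?thesis by (simp add: blocks_def)
next
  case False
  then show ?thesis by (simp add: blocks_def)
qed

lemma blocks_even_aux: "even (count_list (concat (map (\<lambda>i. [1, 1] @ replicate (kappa m n i) (0::nat)) xs)) 1)"
  by (induction xs) auto

lemma blocks_even: "even (count_list (blocks m n a b) 1)"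
  unfolding blocks_def by (rule blocks_even_aux)




lemma n_div_ge2:
  fixes m n :: nat
  assumes "0 < m" "2 * m < n" shows "2 \<le> n div m"
proof -
  have "2 * m div m \<le> n div m" using assms by (intro div_le_mono) simp
  then show ?thesis using assms by simp
qed

lemma q_step:
  fixes m n i :: nat
  assumes "0 < m" "2 * m < n" "1 \<le> i"
  shows "(i - 1) * n div m + 2 \<le> i * n div m"
proof -
  obtain j where j: "i = Suc j" using assms by (cases i) auto
  have "i * n = (i - 1) * n + n" using j by simp
  then have "i * n div m = (i - 1) * n div m + n div m + (((i - 1) * n) mod m + n mod m) div m"
    by (metis div_add1_eq)
  then show ?thesis using n_div_ge2[OF assms(1,2)] by linarith
qed

lemma q_add:
  fixes x y n m :: nat
  shows "(x + y) * n div m = x * n div m + y * n div m + ((x * n) mod m + (y * n) mod m) div m"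
proof -
  have "(x + y) * n = x * n + y * n" by (rule add_mult_distrib)
  then show ?thesis by (metis div_add1_eq)
qed

lemma E_le1:
  fixes x y m :: nat
  assumes "0 < m" shows "(x mod m + y mod m) div m \<le> 1"
proof -
  have "x mod m < m" "y mod m < m" using assms by auto
  then have "x mod m + y mod m < m * 2" by linarith
  then have "(x mod m + y mod m) div m < 2" using assms by (simp add: div_less_iff_less_mult)
  then show ?thesis by simp
qed



lemma E_last:
  fixes m n r :: nat
  assumes "0 < m" "coprime m n" "2 \<le> r" "r \<le> m"
  shows "(((r - 1) * n) mod m + ((m - r + 1) * n) mod m) div m = 1"
proof -
  have nd: "\<not> m dvd (r - 1) * n"
  proof
    assume "m dvd (r - 1) * n"
    then have "m dvd (r - 1)" using assms(2) coprime_dvd_mult_left_iff by blast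
    moreover have "0 < r - 1" "r - 1 < m" using assms by auto
    ultimately show False using nat_dvd_not_less by blast
  qed
  have pos: "0 < ((r - 1) * n) mod m" using nd by (simp add: dvd_eq_mod_eq_0)
  have rr: "(r - 1) + (m - r + 1) = m" using assms by simp
  have sum: "(r - 1) * n + (m - r + 1) * n = m * n"
    by (metis rr add_mult_distrib)
  have "(((r - 1) * n) mod m + ((m - r + 1) * n) mod m) mod m = ((r - 1) * n + (m - r + 1) * n) mod m"
    by (simp only: mod_add_eq)
  also have "... = 0" using sum by simp
  finally have "m dvd (((r - 1) * n) mod m + ((m - r + 1) * n) mod m)"
    by (simp only: dvd_eq_mod_eq_0)
  then obtain k where k: "((r - 1) * n) mod m + ((m - r + 1) * n) mod m = m * k" by blast
  have "((m - r + 1) * n) mod m < m" "((r - 1) * n) mod m < m" using assms by auto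
  then have "m * k < m * 2" "0 < m * k" using k pos by linarith+
  then have "k < 2" "0 < k" by simp_all
  then have "k = 1" by simp
  then show ?thesis using k assms by simp
qed


lemma case_first:
  assumes "kappa m n r + 1 = kappa m n 1 + 1"
  shows "disagree (cword m n r) (kneading m n) \<and> unimodal_less (kneading m n) (cword m n r)"
proof -
  define P :: "nat list" where "P = [1] @ replicate (kappa m n 1) 0"
  obtain s' where s': "blocks m n 2 m @ [1] = 1 # s'" using blocks_hd by blast
  have k: "kneading m n = P @ 1 # s'" unfolding kneading_def P_def using s' by simp
  have c: "cword m n r = P @ 0 # (blocks m n (Suc r) m @ [1])"
    unfolding cword_def P_def using assms by (simp add: replicate_append_same[symmetric])
  show ?thesis by (rule key[OF k c]) (simp add: P_def)
qed

theorem lemma4p2: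
  fixes m n r :: nat
  assumes "0 < m" "2 * m < n" "coprime m n" "1 \<le> r" "r \<le> m"
  shows "disagree (cword m n r) (kneading m n) \<and> unimodal_less (kneading m n) (cword m n r)"
proof (cases "r = 1")
  case True
  then show ?thesis by (intro case_first) simp
next
  case False
  then have r2: "2 \<le> r" using assms by simp
  define q where "q i = i * n div m" for i
  define E where "E i = (((r - 1) * n) mod m + (i * n) mod m) div m" for i
  have HQ: "q (r - 1 + i) = q (r - 1) + q i + E i" for i
    unfolding q_def E_def by (rule q_add)
  have HE: "E i \<le> 1" for i unfolding E_def using E_le1 assms(1) by blast
  have step: "1 \<le> i \<Longrightarrow> q (i - 1) + 2 \<le> q i" for i
    unfolding q_def using q_step assms by blast
  have q0: "q 0 = 0" unfolding q_def by simp
  have K1: "kappa m n 1 = q 1 - 1" unfolding kappa_def q_def by simp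
  have Ki: "2 \<le> i \<Longrightarrow> kappa m n i = q i - q (i - 1) - 2" for i
    unfolding kappa_def q_def by simp
  have q1: "2 \<le> q 1" using step[of 1] q0 by simp
  have Elast: "E (m - r + 1) = 1" unfolding E_def using E_last assms r2 by blast
  define i0 where "i0 = (LEAST i. 1 \<le> i \<and> E i = 1)"
  have ex: "1 \<le> m - r + 1 \<and> E (m - r + 1) = 1" using Elast by simp
  have i0a: "1 \<le> i0 \<and> E i0 = 1" unfolding i0_def by (rule LeastI[where P="\<lambda>i. 1 \<le> i \<and> E i = 1", OF ex])
  have i0b: "i0 \<le> m - r + 1" unfolding i0_def by (rule Least_le[where P="\<lambda>i. 1 \<le> i \<and> E i = 1", OF ex])
  have i0c: "1 \<le> i \<Longrightarrow> i < i0 \<Longrightarrow> E i = 0" for i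
    using not_less_Least[of i "\<lambda>i. 1 \<le> i \<and> E i = 1"] HE[of i] unfolding i0_def[symmetric] by auto
  have Kr: "kappa m n r + 1 = kappa m n 1 + E 1"
  proof -
    have "kappa m n r = q r - q (r - 1) - 2" using Ki r2 by simp
    moreover have "q r = q (r - 1) + q 1 + E 1" using HQ[of 1] r2 by simp
    ultimately show ?thesis using K1 q1 by simp
  qed
  have Kshift: "2 \<le> i \<Longrightarrow> kappa m n (i + (r - 1)) + E (i - 1) = kappa m n i + E i" for i
  proof -
    assume i2: "2 \<le> i"
    have a: "kappa m n (i + (r - 1)) = q (r - 1 + i) - q (r - 1 + (i - 1)) - 2"
      using Ki[of "i + (r - 1)"] i2 by (simp add: add.commute add_diff_assoc2)
    have b: "q (i - 1) + 2 \<le> q i" using step i2 by simp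
    have b2: "q (r - 1 + (i - 1)) + 2 \<le> q (r - 1 + i)" using step[of "r - 1 + i"] i2 by simp
    show ?thesis using a HQ[of i] HQ[of "i - 1"] Ki[OF i2] b b2 HE[of i] HE[of "i - 1"] by simp
  qed
  show ?thesis
  proof (cases "i0 = 1")
    case True
    then show ?thesis using Kr i0a by (intro case_first) simp
  next
    case False
    then have i02: "2 \<le> i0" using i0a by simp
    have E1: "E 1 = 0" using i0c[of 1] i02 by simp
    have sh: "blocks m n (2 + (r - 1)) ((i0 - 1) + (r - 1)) = blocks m n 2 (i0 - 1)"
    proof (rule blocks_shift)
      fix i assume "2 \<le> i" "i \<le> i0 - 1"
      then show "kappa m n (i + (r - 1)) = kappa m n i"
        using Kshift[of i] i0c[of i] i0c[of "i - 1"] by simp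
    qed
    have Klast: "kappa m n (r + i0 - 1) = kappa m n i0 + 1"
    proof -
      have "r + i0 - 1 = i0 + (r - 1)" using r2 by simp
      then show ?thesis using Kshift[OF i02] i0c[of "i0 - 1"] i0a i02 by simp
    qed
    have spl1: "blocks m n (Suc r) m = blocks m n (Suc r) (r + i0 - 2) @ [1,1] @ replicate (kappa m n (r + i0 - 1)) 0 @ blocks m n (r + i0) m"
    proof -
      have h: "1 \<le> Suc r" "Suc r \<le> r + i0 - 1" "r + i0 - 1 \<le> m" using i02 i0b r2 by simp_all
      have h2: "r + i0 - 1 - 1 = r + i0 - 2" "Suc (r + i0 - 1) = r + i0" using i02 by simp_all
      show ?thesis using blocks_split[OF h, of m n] unfolding h2 .
    qed
    have e1: "2 + (r - 1) = Suc r" "(i0 - 1) + (r - 1) = r + i0 - 2" using r2 i02 by simp_all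
    have spl2: "blocks m n 2 m = blocks m n 2 (i0 - 1) @ [1,1] @ replicate (kappa m n i0) 0 @ blocks m n (Suc i0) m"
    proof -
      have h: "1 \<le> (2::nat)" "2 \<le> i0" "i0 \<le> m" using i02 i0b r2 by simp_all
      show ?thesis using blocks_split[OF h, of m n] .
    qed
    define P :: "nat list" where "P = [1] @ replicate (kappa m n 1) 0 @ blocks m n 2 (i0 - 1) @ [1,1] @ replicate (kappa m n i0) 0"
    obtain s' where s': "blocks m n (Suc i0) m @ [1] = 1 # s'" using blocks_hd by blast
    have k: "kneading m n = P @ 1 # s'" unfolding kneading_def P_def using s' spl2 by simp
    have c: "cword m n r = P @ 0 # (blocks m n (r + i0) m @ [1])"
      unfolding cword_def P_def using spl1 sh e1 Klast Kr E1
      by (simp add: replicate_append_same[symmetric])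
    have o: "odd (count_list P 1)"
      using blocks_even[of m n 2 "i0 - 1"] by (simp add: P_def)
    show ?thesis by (rule key[OF k c o])
  qed
qed

end
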